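(* Let $(c_{n,i})_{n,i\ge 0}$ be the integers defined by $c_{0,1}=1$, $c_{0,i}=0$ for $i\ne 1$, and for $n\ge 0$, $i\ge 0$, \[c_{n+1,i}=\sum_{j=i}^{n+1}\binom{j}{i}c_{n,j}+\sum_{j=0}^{i}\sum_{k=0}^{n}c_{k,j}\,c_{n-k,i-j}.\] Let $(P_n)_{n\ge0}$ be the polynomials defined by $P_0(m)=m$ and $P_{n+1}(m)=P_n(m+1)+\sum_{i=0}^{n}P_i(m)P_{n-i}(m)$. Then $c_{n,i}=0$ whenever $i>n+1$, and for every $n\ge 0$, \[P_n(m)=\sum_{i=0}^{n+1}c_{n,i}\,m^i .\] In particular, the number $T_{n,m}$ of lambda terms (with de Bruijn indices) of size $n$ with at most $m$ distinct free indices equals $\sum_{i=0}^{n+1}c_{n,i}m^i$.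
   Context: Lambda terms are written with de Bruijn indices $\underline{1},\underline{2},\dots$; the size is $|\underline{k}|=0$, $|\lambda t|=|t|+1$, $|t\,s|=|t|+|s|+1$. $T_{n,m}$ is the number of terms of size $n$ all of whose free indices lie in $\{\underline 1,\dots,\underline m\}$; it satisfies $T_{0,m}=m$ and $T_{n+1,m}=T_{n,m+1}+\sum_{i=0}^{n}T_{i,m}T_{n-i,m}$, so $T_{n,m}=P_n(m)$. Combinatorially, $c_{n,i}$ counts $i$-contexts of size $n$: closed terms containing exactly $i$ holes (each hole a leaf of size $0$ occurring once, holes numbered left to right). *)

theory Defs
  imports Main
begin

function c :: "nat \<Rightarrow> nat \<Rightarrow> int" where
  "c 0 i = (if i = 1 then 1 else 0)"
| "c (Suc n) i =
     (\<Sum>j=i..Suc n. of_nat (j choose i) * c n j)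
   + (\<Sum>j=0..i. \<Sum>k=0..n. c k j * c (n - k) (i - j))"
  by pat_completeness auto
termination
  by (relation "measure fst") auto

function P :: "nat \<Rightarrow> int \<Rightarrow> int" where
  "P 0 m = m"
| "P (Suc n) m = P n (m + 1) + (\<Sum>i=0..n. P i m * P (n - i) m)"
  by pat_completeness auto
termination
  by (relation "measure fst") auto

end

theory Submission
  imports Defs "HOL-Computational_Algebra.Polynomial"
begin

lemma c_zero: "i > n + 1 \<Longrightarrow> c n i = 0"
proof (induction n arbitrary: i rule: less_induct)
  case (less n)
  show ?case
  proof (cases n)
    case 0 then show ?thesis using less by simp
  next
    case (Suc n')
    have A: "(\<Sum>j=i..Suc n'. of_nat (j choose i) * c n' j) = 0"
      using less Suc by simp
    have B: "c k j * c (n' - k) (i - j) = 0" if "j \<in> {0..i}" "k \<in> {0..n'}" for j k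
    proof (cases "j > k + 1")
      case True then show ?thesis using less.IH[of k j] Suc that by simp
    next
      case False
      then have "i - j > n' - k + 1" using less Suc that by auto
      then show ?thesis using less.IH[of "n' - k" "i - j"] Suc that by simp
    qed
    have "(\<Sum>j=0..i. \<Sum>k=0..n'. c k j * c (n' - k) (i - j)) = 0"
      by (intro sum.neutral ballI) (simp add: B)
    then show ?thesis unfolding Suc c.simps A by simp
  qed
qed

definition pp :: "nat \<Rightarrow> int poly" where
  "pp n = (\<Sum>i\<le>n+1. monom (c n i) i)"

lemma coeff_pp: "coeff (pp n) i = c n i"
  unfolding pp_def coeff_sum using c_zero[of n i] by (auto simp: not_le)

lemma degree_pp: "degree (pp n) \<le> n + 1"
  unfolding pp_def by (intro degree_sum_le) (auto intro: order.trans[OF degree_monom_le])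

lemma poly_le: "degree p \<le> N \<Longrightarrow> poly p (m::int) = (\<Sum>i=0..N. coeff p i * m ^ i)"
proof -
  assume "degree p \<le> N"
  have "poly p m = (\<Sum>i\<le>degree p. coeff p i * m ^ i)" by (rule poly_altdef)
  also have "\<dots> = (\<Sum>i\<le>N. coeff p i * m ^ i)"
    using \<open>degree p \<le> N\<close> by (intro sum.mono_neutral_left) (auto simp: coeff_eq_0)
  finally show ?thesis by (simp add: atLeast0AtMost)
qed

lemma poly_pp: "poly (pp n) m = (\<Sum>i=0..n+1. c n i * m ^ i)"
  using poly_le[OF degree_pp] by (simp add: coeff_pp)

lemma P_pp: "P n m = poly (pp n) m"
proof (induction n arbitrary: m rule: less_induct)
  case (less n)
  show ?case
  proof (cases n)
    case 0 then show ?thesis by (simp add: poly_pp)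
  next
    case (Suc n)
    have IH: "\<And>k m. k \<le> n \<Longrightarrow> P k m = poly (pp k) m" using less Suc by simp
    have A: "(\<Sum>i=0..n+2. (\<Sum>j=i..Suc n. of_nat (j choose i) * c n j) * m ^ i)
          = poly (pp n) (m + 1)"
    proof -
      have "(\<Sum>i=0..n+2. (\<Sum>j=i..Suc n. of_nat (j choose i) * c n j) * m ^ i)
          = (\<Sum>i=0..n+2. \<Sum>j=0..Suc n. (if i \<le> j then of_nat (j choose i) * c n j * m ^ i else 0))"
      proof (intro sum.cong refl)
        fix i
        have "{0..Suc n} \<inter> {j. i \<le> j} = {i..Suc n}" by auto
        have "(\<Sum>j=0..Suc n. (if i \<le> j then of_nat (j choose i) * c n j * m ^ i else 0))
           = (\<Sum>j\<in>{0..Suc n} \<inter> {j. i \<le> j}. of_nat (j choose i) * c n j * m ^ i)"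
          using sum.inter_filter[of "{0..Suc n}" "\<lambda>j. of_nat (j choose i) * c n j * m ^ i" "\<lambda>j. i \<le> j"]
          by (simp add: Int_def)
        also have "\<dots> = (\<Sum>j=i..Suc n. of_nat (j choose i) * c n j) * m ^ i"
          by (simp only: \<open>{0..Suc n} \<inter> {j. i \<le> j} = {i..Suc n}\<close> sum_distrib_right)
        finally show "(\<Sum>j=i..Suc n. of_nat (j choose i) * c n j) * m ^ i
          = (\<Sum>j=0..Suc n. (if i \<le> j then of_nat (j choose i) * c n j * m ^ i else 0))" by simp
      qed
      also have "\<dots> = (\<Sum>j=0..Suc n. \<Sum>i=0..n+2. (if i \<le> j then of_nat (j choose i) * c n j * m ^ i else 0))"
        by (rule sum.swap)
      also have "\<dots> = (\<Sum>j=0..Suc n. c n j * (m + 1) ^ j)"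
      proof (intro sum.cong refl)
        fix j assume j: "j \<in> {0..Suc n}"
        have "(\<Sum>i=0..n+2. (if i \<le> j then of_nat (j choose i) * c n j * m ^ i else 0))
            = (\<Sum>i\<le>j. of_nat (j choose i) * c n j * m ^ i)"
        proof -
          have e: "{x \<in> {0..n+2}. x \<le> j} = {..j}" using j by auto
          show ?thesis
          using sum.inter_filter[of "{0..n+2}" "\<lambda>i. of_nat (j choose i) * c n j * m ^ i" "\<lambda>i. i \<le> j"]
          by (simp only: e finite_atLeastAtMost)
        qed
        also have "\<dots> = c n j * (m + 1) ^ j"
          by (simp add: binomial_ring sum_distrib_left mult_ac)
        finally show "(\<Sum>i=0..n+2. (if i \<le> j then of_nat (j choose i) * c n j * m ^ i else 0)) = c n j * (m + 1) ^ j" .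
      qed
      finally show ?thesis by (simp add: poly_pp)
    qed
    have B: "(\<Sum>i=0..n+2. (\<Sum>j=0..i. \<Sum>k=0..n. c k j * c (n - k) (i - j)) * m ^ i)
          = (\<Sum>k=0..n. poly (pp k) m * poly (pp (n - k)) m)"
    proof -
      have "(\<Sum>i=0..n+2. (\<Sum>j=0..i. \<Sum>k=0..n. c k j * c (n - k) (i - j)) * m ^ i)
          = (\<Sum>i=0..n+2. \<Sum>k=0..n. coeff (pp k * pp (n - k)) i * m ^ i)"
        by (intro sum.cong refl) (simp add: coeff_mult coeff_pp atLeast0AtMost sum_distrib_right, rule sum.swap)
      also have "\<dots> = (\<Sum>k=0..n. \<Sum>i=0..n+2. coeff (pp k * pp (n - k)) i * m ^ i)"
        by (rule sum.swap)
      also have "\<dots> = (\<Sum>k=0..n. poly (pp k * pp (n - k)) m)"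
      proof (intro sum.cong refl)
        fix k assume k: "k \<in> {0..n}"
        have "degree (pp k * pp (n - k)) \<le> n + 2"
          using degree_mult_le[of "pp k" "pp (n-k)"] degree_pp[of k] degree_pp[of "n-k"] k by auto
        then show "(\<Sum>i=0..n+2. coeff (pp k * pp (n - k)) i * m ^ i) = poly (pp k * pp (n - k)) m"
          by (rule poly_le[symmetric])
      qed
      finally show ?thesis by simp
    qed
    have "P (Suc n) m = poly (pp n) (m + 1) + (\<Sum>k=0..n. poly (pp k) m * poly (pp (n - k)) m)"
      by (simp add: IH)
    also have "\<dots> = (\<Sum>i=0..n+2. c (Suc n) i * m ^ i)"
      unfolding A[symmetric] B[symmetric] c.simps
      by (simp add: sum.distrib distrib_right)
    also have "\<dots> = poly (pp (Suc n)) m" by (simp add: poly_pp)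
    finally show ?thesis using Suc by simp
  qed
qed

theorem mainTheorem3:
  shows "(\<forall>n i. i > n + 1 \<longrightarrow> c n i = 0)
       \<and> (\<forall>n (m::int). P n m = (\<Sum>i=0..n+1. c n i * m ^ i))"
  using c_zero P_pp poly_pp by auto

end
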